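(* In the multispectral 2D Toda setting described in the context, let $Z_1(t)$ and $Z_2(t)$ be semi-infinite matrices such that $Z_1(t)\big(W^{(0)}_1(t_1)\big)^{-1}$ is block strictly lower triangular, $Z_2(t)\big(W^{(0)}_2(t_2)\big)^{-\top}$ is block upper triangular, and $Z_1(t)G=Z_2(t)$. Then $Z_1(t)=0$ and $Z_2(t)=0$.
   Context: Multi-indices ordered by graded lexicographic order; semi-infinite matrices partitioned in blocks indexed by $[k]=\{\boldsymbol\alpha\in\mathbb Z_+^D:|\boldsymbol\alpha|=k\}$. Spectral matrices $(\Lambda_a)_{\boldsymbol\alpha,\boldsymbol\beta}=\delta_{\boldsymbol\alpha+\boldsymbol e_a,\boldsymbol\beta}$, $\boldsymbol\Lambda^{\boldsymbol\alpha}=\Lambda_1^{\alpha_1}\cdots\Lambda_D^{\alpha_D}$. $G$ is a semi-infinite complex matrix; times $t_i=(t_{i,\boldsymbol\alpha})_{\boldsymbol\alpha\in\mathbb Z_+^D}$, $i=1,2$; $W^{(0)}_i(t_i)=\exp\big(\sum_{\boldsymbol\alpha}t_{i,\boldsymbol\alpha}\boldsymbol\Lambda^{\boldsymbol\alpha}\big)$; $G(t)=W_1^{(0)}(t_1)G\big(W_2^{(0)}(t_2)\big)^{-\top}$ is assumed to admit a block Gauss–Borel factorization $G(t)=S_1(t)^{-1}H(t)S_2(t)^{-\top}$ with $S_i$ block lower unitriangular and $H$ block diagonal. *)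

theory Defs
  imports "HOL-Analysis.Analysis"
begin

text \<open>Multi-indices in Z_+^D are functions from a finite linearly ordered index type 'd
  (with D = CARD('d)) to nat. Block structure is given by the total degree |alpha|.\<close>

type_synonym 'd midx = "'d \<Rightarrow> nat"
type_synonym 'd smat = "'d midx \<Rightarrow> 'd midx \<Rightarrow> complex"

definition deg :: "('d::finite) midx \<Rightarrow> nat" where
  "deg \<alpha> = (\<Sum>a\<in>UNIV. \<alpha> a)"

definition mmult :: "'d smat \<Rightarrow> 'd smat \<Rightarrow> 'd smat" where
  "mmult A B = (\<lambda>\<alpha> \<gamma>. \<Sum>\<^sub>\<infinity>\<beta>. A \<alpha> \<beta> * B \<beta> \<gamma>)"

definition mone :: "'d smat" where
  "mone = (\<lambda>\<alpha> \<beta>. if \<alpha> = \<beta> then 1 else 0)"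

definition mtrans :: "'d smat \<Rightarrow> 'd smat" where
  "mtrans A = (\<lambda>\<alpha> \<beta>. A \<beta> \<alpha>)"

definition mpow :: "'d smat \<Rightarrow> nat \<Rightarrow> 'd smat" where
  "mpow M n = ((mmult M) ^^ n) mone"

definition mmult3 :: "'d smat \<Rightarrow> 'd smat \<Rightarrow> 'd smat \<Rightarrow> 'd smat" where
  "mmult3 A B C = (\<lambda>\<alpha> \<gamma>. \<Sum>\<^sub>\<infinity>(\<beta>,\<delta>). A \<alpha> \<beta> * B \<beta> \<delta> * C \<delta> \<gamma>)"

definition mmult3_defined :: "'d smat \<Rightarrow> 'd smat \<Rightarrow> 'd smat \<Rightarrow> bool" where
  "mmult3_defined A B C \<longleftrightarrow>
     (\<forall>\<alpha> \<gamma>. (\<lambda>(\<beta>,\<delta>). norm (A \<alpha> \<beta> * B \<beta> \<delta> * C \<delta> \<gamma>)) summable_on UNIV)"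

definition mexp :: "'d smat \<Rightarrow> 'd smat" where
  "mexp M = (\<lambda>\<alpha> \<beta>. \<Sum>n. mpow M n \<alpha> \<beta> / of_nat (fact n))"

definition unitv :: "'d \<Rightarrow> 'd midx" where
  "unitv a = (\<lambda>b. if b = a then 1 else 0)"

definition Lam :: "'d \<Rightarrow> 'd smat" where
  "Lam a = (\<lambda>\<alpha> \<beta>. if (\<lambda>b. \<alpha> b + unitv a b) = \<beta> then 1 else 0)"

definition Lam_pow :: "('d::{finite,linorder}) midx \<Rightarrow> 'd smat" where
  "Lam_pow \<alpha> = foldr (\<lambda>a M. mmult (mpow (Lam a) (\<alpha> a)) M)
                      (sorted_list_of_set (UNIV :: 'd set)) mone"

definition tLam :: "(('d::{finite,linorder}) midx \<Rightarrow> complex) \<Rightarrow> 'd smat" where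
  "tLam t = (\<lambda>\<beta> \<gamma>. \<Sum>\<^sub>\<infinity>\<alpha>. t \<alpha> * Lam_pow \<alpha> \<beta> \<gamma>)"

definition W0 :: "(('d::{finite,linorder}) midx \<Rightarrow> complex) \<Rightarrow> 'd smat" where
  "W0 t = mexp (tLam t)"

definition W0inv :: "(('d::{finite,linorder}) midx \<Rightarrow> complex) \<Rightarrow> 'd smat" where
  "W0inv t = mexp (\<lambda>\<beta> \<gamma>. - tLam t \<beta> \<gamma>)"

definition block_lower :: "('d::finite) smat \<Rightarrow> bool" where
  "block_lower A \<longleftrightarrow> (\<forall>\<alpha> \<beta>. deg \<alpha> < deg \<beta> \<longrightarrow> A \<alpha> \<beta> = 0)"

definition block_strictly_lower :: "('d::finite) smat \<Rightarrow> bool" where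
  "block_strictly_lower A \<longleftrightarrow> (\<forall>\<alpha> \<beta>. deg \<alpha> \<le> deg \<beta> \<longrightarrow> A \<alpha> \<beta> = 0)"

definition block_upper :: "('d::finite) smat \<Rightarrow> bool" where
  "block_upper A \<longleftrightarrow> (\<forall>\<alpha> \<beta>. deg \<beta> < deg \<alpha> \<longrightarrow> A \<alpha> \<beta> = 0)"

definition block_diagonal :: "('d::finite) smat \<Rightarrow> bool" where
  "block_diagonal A \<longleftrightarrow> (\<forall>\<alpha> \<beta>. deg \<alpha> \<noteq> deg \<beta> \<longrightarrow> A \<alpha> \<beta> = 0)"

definition block_lower_unitriangular :: "('d::finite) smat \<Rightarrow> bool" where
  "block_lower_unitriangular A \<longleftrightarrow> block_lower A \<and>
     (\<forall>\<alpha> \<beta>. deg \<alpha> = deg \<beta> \<longrightarrow> A \<alpha> \<beta> = mone \<alpha> \<beta>)"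

definition block_diagonal_nonsingular :: "('d::finite) smat \<Rightarrow> bool" where
  "block_diagonal_nonsingular H \<longleftrightarrow> block_diagonal H \<and>
     (\<exists>K. block_diagonal K \<and> mmult H K = mone \<and> mmult K H = mone)"

text \<open>Inverse of a block lower unitriangular matrix (unique within that class).\<close>
definition lu_inv :: "('d::finite) smat \<Rightarrow> 'd smat" where
  "lu_inv S = (THE B. block_lower_unitriangular B \<and> mmult B S = mone \<and> mmult S B = mone)"

end

theory Submission
  imports Defs
begin


definition rowfin :: "'d smat \<Rightarrow> bool" where
  "rowfin A \<longleftrightarrow> (\<forall>a. finite {x. A a x \<noteq> 0})"

definition colfin :: "'d smat \<Rightarrow> bool" where
  "colfin A \<longleftrightarrow> rowfin (mtrans A)"

lemma mmult_fin:
  assumes "finite F" "\<And>x. x \<notin> F \<Longrightarrow> A a x * B x c = 0"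
  shows "mmult A B a c = (\<Sum>x\<in>F. A a x * B x c)"
proof -
  have "mmult A B a c = infsum (\<lambda>x. A a x * B x c) F"
    unfolding mmult_def by (rule infsum_cong_neutral) (use assms in auto)
  then show ?thesis using assms(1) by simp
qed

lemma mmult_rowfin:
  assumes "rowfin A"
  shows "mmult A B a c = (\<Sum>x\<in>{x. A a x \<noteq> 0}. A a x * B x c)"
  using assms unfolding rowfin_def by (intro mmult_fin) auto

lemma mmult_zero_left[simp]: "mmult (\<lambda>_ _. 0) B = (\<lambda>_ _. 0)"
  unfolding mmult_def by simp

lemma mmult_mone_right[simp]: "mmult A mone = A"
proof (intro ext)
  fix a c
  have "mmult A mone a c = (\<Sum>x\<in>{c}. A a x * mone x c)"
    by (rule mmult_fin) (auto simp: mone_def)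
  then show "mmult A mone a c = A a c" by (simp add: mone_def)
qed

lemma mmult_mone_left[simp]: "mmult mone B = B"
proof (intro ext)
  fix a c
  have "mmult mone B a c = (\<Sum>x\<in>{a}. mone a x * B x c)"
    by (rule mmult_fin) (auto simp: mone_def)
  then show "mmult mone B a c = B a c" by (simp add: mone_def)
qed

lemma mtrans_mtrans[simp]: "mtrans (mtrans A) = A"
  unfolding mtrans_def by simp

lemma mtrans_mmult: "mtrans (mmult A B) = mmult (mtrans B) (mtrans A)"
  unfolding mtrans_def mmult_def by (simp add: mult.commute)

lemma mtrans_mone[simp]: "mtrans mone = mone"
  unfolding mtrans_def mone_def by (auto intro!: ext)

lemma rowfin_mmult:
  assumes "rowfin A" "rowfin B"
  shows "rowfin (mmult A B)"
  unfolding rowfin_def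
proof
  fix a
  let ?R = "{x. A a x \<noteq> 0}"
  have fR: "finite ?R" using assms(1) by (simp add: rowfin_def)
  have "{y. mmult A B a y \<noteq> 0} \<subseteq> (\<Union>x\<in>?R. {y. B x y \<noteq> 0})"
  proof
    fix y assume "y \<in> {y. mmult A B a y \<noteq> 0}"
    then have "(\<Sum>x\<in>?R. A a x * B x y) \<noteq> 0" using mmult_rowfin[OF assms(1)] by auto
    then obtain x where "x \<in> ?R" "A a x * B x y \<noteq> 0" by (meson sum.neutral)
    then show "y \<in> (\<Union>x\<in>?R. {y. B x y \<noteq> 0})" by auto
  qed
  moreover have "finite (\<Union>x\<in>?R. {y. B x y \<noteq> 0})"
    using fR assms(2) by (auto simp: rowfin_def)
  ultimately show "finite {y. mmult A B a y \<noteq> 0}" by (rule finite_subset)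
qed

lemma assoc_rowfin:
  assumes "rowfin A" "rowfin B"
  shows "mmult (mmult A B) C = mmult A (mmult B C)"
proof (intro ext)
  fix a c
  define R where "R = {x. A a x \<noteq> 0}"
  define S where "S = (\<Union>x\<in>R. {y. B x y \<noteq> 0})"
  have fR: "finite R" using assms(1) by (simp add: rowfin_def R_def)
  have fS: "finite S" using fR assms(2) by (auto simp: rowfin_def S_def)
  have AB: "mmult A B a y = (\<Sum>x\<in>R. A a x * B x y)" for y
    unfolding R_def by (rule mmult_rowfin[OF assms(1)])
  have ABz: "mmult A B a y = 0" if "y \<notin> S" for y
    unfolding AB by (rule sum.neutral) (use that in \<open>auto simp: S_def\<close>)
  have "mmult (mmult A B) C a c = (\<Sum>y\<in>S. mmult A B a y * C y c)"
    by (rule mmult_fin[OF fS]) (simp add: ABz)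
  also have "\<dots> = (\<Sum>y\<in>S. \<Sum>x\<in>R. A a x * B x y * C y c)"
    by (simp add: AB sum_distrib_right)
  also have "\<dots> = (\<Sum>x\<in>R. \<Sum>y\<in>S. A a x * B x y * C y c)"
    by (rule sum.swap)
  also have "\<dots> = (\<Sum>x\<in>R. A a x * mmult B C x c)"
  proof (rule sum.cong[OF refl])
    fix x assume x: "x \<in> R"
    have "mmult B C x c = (\<Sum>y\<in>S. B x y * C y c)"
      by (rule mmult_fin[OF fS]) (use x in \<open>auto simp: S_def\<close>)
    then show "(\<Sum>y\<in>S. A a x * B x y * C y c) = A a x * mmult B C x c"
      by (simp add: sum_distrib_left mult.assoc)
  qed
  also have "\<dots> = mmult A (mmult B C) a c"
    unfolding R_def by (rule mmult_rowfin[OF assms(1), symmetric])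
  finally show "mmult (mmult A B) C a c = mmult A (mmult B C) a c" .
qed

lemma assoc_colfin:
  assumes "colfin B" "colfin C"
  shows "mmult (mmult A B) C = mmult A (mmult B C)"
proof -
  have "mtrans (mmult (mmult A B) C) = mtrans (mmult A (mmult B C))"
    using assms unfolding colfin_def
    by (simp add: mtrans_mmult assoc_rowfin)
  then show ?thesis by (metis mtrans_mtrans)
qed



lemma le_deg: "(x::('d::finite) midx) a \<le> deg x"
  unfolding deg_def by (rule member_le_sum) auto

lemma fin_deg: "finite {x::('d::finite) midx. deg x \<le> k}"
proof (rule finite_subset)
  show "{x::'d midx. deg x \<le> k} \<subseteq> Pi\<^sub>E UNIV (\<lambda>_. {..k})"
    by (auto simp: PiE_UNIV_domain intro: order_trans[OF le_deg])
  show "finite (Pi\<^sub>E (UNIV::'d set) (\<lambda>_. {..k}))" by (rule finite_PiE) auto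
qed

lemma mmult_nonzero:
  assumes "mmult A B a c \<noteq> 0"
  shows "\<exists>x. A a x \<noteq> 0 \<and> B x c \<noteq> 0"
proof (rule ccontr)
  assume "\<not> ?thesis"
  then have "mmult A B a c = 0" unfolding mmult_def by (intro infsum_0) auto
  with assms show False by simp
qed

lemma rowfin_mone: "rowfin mone"
proof -
  have h: "{x. mone a x \<noteq> (0::complex)} = {a}" for a :: "'d midx" by (auto simp: mone_def)
  show ?thesis unfolding rowfin_def by (simp add: h)
qed

definition rowdeg :: "('d::finite) smat \<Rightarrow> bool" where
  "rowdeg A \<longleftrightarrow> (\<forall>a x. A a x \<noteq> 0 \<longrightarrow> deg x \<le> deg a)"

lemma rowdeg_rowfin: "rowdeg A \<Longrightarrow> rowfin A"
  unfolding rowfin_def rowdeg_def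
  by (auto intro: finite_subset[OF _ fin_deg])

lemma rowdeg_mmult_fin:
  assumes "rowdeg A"
  shows "mmult A B a c = (\<Sum>x\<in>{x. deg x \<le> deg a}. A a x * B x c)"
  using assms unfolding rowdeg_def by (intro mmult_fin fin_deg) auto

lemma block_lower_rowdeg: "block_lower A \<Longrightarrow> rowdeg A"
  unfolding block_lower_def rowdeg_def by (meson not_le)

lemma blut_rowdeg: "block_lower_unitriangular A \<Longrightarrow> rowdeg A"
  unfolding block_lower_unitriangular_def by (simp add: block_lower_rowdeg)

lemma bsl_rowdeg: "block_strictly_lower A \<Longrightarrow> rowdeg A"
  unfolding block_strictly_lower_def rowdeg_def by (meson nat_le_linear)

lemma bd_rowdeg: "block_diagonal A \<Longrightarrow> rowdeg A"
  unfolding block_diagonal_def rowdeg_def by (metis le_refl)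

lemma rowfin_mpow: "rowfin N \<Longrightarrow> rowfin (mpow N k)"
  by (induction k) (simp_all add: mpow_def rowfin_mone rowfin_mmult)

lemma mpow_Suc: "mpow N (Suc k) = mmult N (mpow N k)"
  by (simp add: mpow_def)

lemma mpow_0: "mpow N 0 = mone"
  by (simp add: mpow_def)

lemma mpow_Suc_right:
  assumes "rowfin N"
  shows "mmult (mpow N k) N = mpow N (Suc k)"
proof (induction k)
  case 0 then show ?case by (simp add: mpow_def)
next
  case (Suc k)
  have "mmult (mpow N (Suc k)) N = mmult N (mmult (mpow N k) N)"
    by (simp add: mpow_Suc assoc_rowfin assms rowfin_mpow)
  then show ?case using Suc by (simp add: mpow_Suc)
qed

section \<open>Inverse of block lower unitriangular matrices\<close>

lemma lu_unique:
  assumes "block_lower_unitriangular B1" "mmult B1 S = mone" "mmult S B2 = mone"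
    and "block_lower_unitriangular S"
  shows "B1 = B2"
proof -
  have "B1 = mmult B1 (mmult S B2)" using assms by simp
  also have "\<dots> = mmult (mmult B1 S) B2"
    by (rule assoc_rowfin[symmetric]) (use assms in \<open>simp_all add: rowdeg_rowfin blut_rowdeg\<close>)
  also have "\<dots> = B2" using assms(2) by simp
  finally show ?thesis .
qed

lemma lu_exists:
  fixes S :: "('d::finite) smat"
  assumes S: "block_lower_unitriangular S"
  shows "\<exists>B. block_lower_unitriangular B \<and> mmult B S = mone \<and> mmult S B = mone"
proof -
  define N where "N = (\<lambda>a b. mone a b - S a b)"
  have Nz: "N a x = 0" if "deg a \<le> deg x" for a x
  proof (cases "deg a = deg x")
    case True then show ?thesis using S by (simp add: N_def block_lower_unitriangular_def)
  next
    case False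
    then have "deg a < deg x" "a \<noteq> x" using that by auto
    then show ?thesis using S by (simp add: N_def block_lower_unitriangular_def block_lower_def mone_def)
  qed
  have Nrd: "rowdeg N" unfolding rowdeg_def using Nz by (meson nat_le_linear)
  have Nrf: "rowfin N" by (rule rowdeg_rowfin[OF Nrd])
  have Npow: "mpow N k a c \<noteq> 0 \<Longrightarrow> deg c + k \<le> deg a" for k a c
  proof (induction k arbitrary: a)
    case 0 then show ?case by (simp add: mpow_0 mone_def split: if_splits)
  next
    case (Suc k)
    then obtain x where x: "N a x \<noteq> 0" "mpow N k x c \<noteq> 0"
      using mmult_nonzero by (metis mpow_Suc)
    have "deg x < deg a" using x(1) Nz by (meson not_le)
    then show ?case using Suc.IH[OF x(2)] by simp
  qed
  define Bn where "Bn n a c = (\<Sum>k\<le>n. mpow N k a c)" for n a c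
  define B where "B a c = Bn (deg a) a c" for a c
  have Bn_eq: "Bn n a c = B a c" if "deg a \<le> n" for n a c
  proof -
    have "Bn n a c = (\<Sum>k\<le>deg a. mpow N k a c)"
      unfolding Bn_def
      by (rule sum.mono_neutral_right) (use that Npow in \<open>force+\<close>)
    then show ?thesis by (simp add: B_def Bn_def)
  qed
  have Bnz: "B a c \<noteq> 0 \<Longrightarrow> deg c \<le> deg a" for a c
  proof -
    assume "B a c \<noteq> 0"
    then obtain k where "mpow N k a c \<noteq> 0" unfolding B_def Bn_def by (meson sum.neutral)
    then show ?thesis using Npow by fastforce
  qed
  have Brd: "rowdeg B" unfolding rowdeg_def using Bnz by blast
  have Bdiag: "B a c = mone a c" if "deg a = deg c" for a c
  proof -
    have "B a c = (\<Sum>k\<in>{0}. mpow N k a c)"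
      unfolding B_def Bn_def
      by (rule sum.mono_neutral_right) (use that Npow in \<open>force+\<close>)
    then show ?thesis by (simp add: mpow_0)
  qed
  have blutB: "block_lower_unitriangular B"
    unfolding block_lower_unitriangular_def block_lower_def
    using Bnz Bdiag by (meson not_le)
  have Srd: "rowdeg S" by (rule blut_rowdeg[OF S])
  have Sdef: "S a b = mone a b - N a b" for a b by (simp add: N_def)
  have SB: "mmult S B = mone"
  proof (intro ext)
    fix a c :: "'d midx"
    define F where "F = {x::'d midx. deg x \<le> deg a}"
    let ?n = "deg a"
    have aF: "a \<in> F" by (simp add: F_def)
    have "mmult S B a c = (\<Sum>x\<in>F. S a x * B x c)"
      unfolding F_def by (rule rowdeg_mmult_fin[OF Srd])
    also have "\<dots> = (\<Sum>x\<in>F. S a x * Bn ?n x c)"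
      by (rule sum.cong) (auto simp: F_def Bn_eq)
    also have "\<dots> = (\<Sum>k\<le>?n. (\<Sum>x\<in>F. mone a x * mpow N k x c) - (\<Sum>x\<in>F. N a x * mpow N k x c))"
      unfolding Bn_def Sdef
      by (simp add: sum_distrib_left algebra_simps sum_subtractf sum.swap[of _ F])
    also have "\<dots> = (\<Sum>k\<le>?n. mpow N k a c - mpow N (Suc k) a c)"
    proof (rule sum.cong[OF refl])
      fix k
      have 1: "(\<Sum>x\<in>F. mone a x * mpow N k x c) = mpow N k a c"
      proof -
        have "(\<Sum>x\<in>F. mone a x * mpow N k x c) = (\<Sum>x\<in>F. if a = x then mpow N k a c else 0)"
          by (rule sum.cong) (auto simp: mone_def)
        then show ?thesis using aF by (simp add: F_def sum.delta[OF fin_deg] sum.delta'[OF fin_deg])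
      qed
      have 2: "(\<Sum>x\<in>F. N a x * mpow N k x c) = mpow N (Suc k) a c"
        unfolding mpow_Suc F_def by (rule rowdeg_mmult_fin[OF Nrd, symmetric])
      show "(\<Sum>x\<in>F. mone a x * mpow N k x c) - (\<Sum>x\<in>F. N a x * mpow N k x c) =
            mpow N k a c - mpow N (Suc k) a c" using 1 2 by simp
    qed
    also have "\<dots> = mpow N 0 a c - mpow N (Suc ?n) a c"
      by (rule sum_telescope)
    also have "mpow N (Suc ?n) a c = 0" using Npow[of "Suc ?n" a c] by fastforce
    finally show "mmult S B a c = mone a c" by (simp add: mpow_0)
  qed
  have BS: "mmult B S = mone"
  proof (intro ext)
    fix a c :: "'d midx"
    define F where "F = {x::'d midx. deg x \<le> deg a}"
    let ?n = "deg a"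
    have "mmult B S a c = (\<Sum>x\<in>F. B a x * S x c)"
      unfolding F_def by (rule rowdeg_mmult_fin[OF Brd])
    also have "\<dots> = (\<Sum>x\<in>F. Bn ?n a x * S x c)"
      by (simp add: Bn_eq)
    also have "\<dots> = (\<Sum>x\<in>F. \<Sum>k\<le>?n. mpow N k a x * mone x c - mpow N k a x * N x c)"
      unfolding Bn_def Sdef by (simp add: sum_distrib_right right_diff_distrib sum_subtractf)
    also have "\<dots> = (\<Sum>k\<le>?n. \<Sum>x\<in>F. mpow N k a x * mone x c - mpow N k a x * N x c)"
      by (rule sum.swap)
    also have "\<dots> = (\<Sum>k\<le>?n. (\<Sum>x\<in>F. mpow N k a x * mone x c) - (\<Sum>x\<in>F. mpow N k a x * N x c))"
      by (simp add: sum_subtractf)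
    also have "\<dots> = (\<Sum>k\<le>?n. mpow N k a c - mpow N (Suc k) a c)"
    proof (rule sum.cong[OF refl])
      fix k
      have 1: "(\<Sum>x\<in>F. mpow N k a x * mone x c) = mpow N k a c"
      proof (cases "c \<in> F")
        case True then show ?thesis
          using fin_deg[of "deg a"] by (simp add: mone_def F_def if_distrib sum.delta[OF fin_deg] sum.delta'[OF fin_deg] cong: if_cong)
      next
        case False
        then have "mpow N k a c = 0" using Npow[of k a c] by (force simp: F_def)
        moreover have "(\<Sum>x\<in>F. mpow N k a x * mone x c) = 0"
          using False by (intro sum.neutral) (auto simp: mone_def)
        ultimately show ?thesis by simp
      qed
      have 2: "(\<Sum>x\<in>F. mpow N k a x * N x c) = mpow N (Suc k) a c"
      proof -
        have "mmult (mpow N k) N a c = (\<Sum>x\<in>F. mpow N k a x * N x c)"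
          unfolding F_def by (rule mmult_fin[OF fin_deg]) (use Npow in fastforce)
        then show ?thesis using mpow_Suc_right[OF Nrf] by simp
      qed
      show "(\<Sum>x\<in>F. mpow N k a x * mone x c) - (\<Sum>x\<in>F. mpow N k a x * N x c) =
            mpow N k a c - mpow N (Suc k) a c" using 1 2 by simp
    qed
    also have "\<dots> = mpow N 0 a c - mpow N (Suc ?n) a c"
      by (rule sum_telescope)
    also have "mpow N (Suc ?n) a c = 0" using Npow[of "Suc ?n" a c] by fastforce
    finally show "mmult B S a c = mone a c" by (simp add: mpow_0)
  qed
  show ?thesis using blutB BS SB by blast
qed

lemma lu_inv_props:
  assumes S: "block_lower_unitriangular S"
  shows "block_lower_unitriangular (lu_inv S) \<and> mmult (lu_inv S) S = mone \<and> mmult S (lu_inv S) = mone"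
proof -
  have "\<exists>!B. block_lower_unitriangular B \<and> mmult B S = mone \<and> mmult S B = mone"
    using lu_exists[OF S] lu_unique[OF _ _ _ S] by blast
  then show ?thesis unfolding lu_inv_def by (rule theI')
qed



definition cupper :: "'d smat \<Rightarrow> bool" where
  "cupper A \<longleftrightarrow> (\<forall>b c. A b c \<noteq> 0 \<longrightarrow> b \<le> c)"

lemma fin_below: "finite {x::('d::finite) midx. x \<le> c}"
proof (rule finite_subset)
  show "{x::'d midx. x \<le> c} \<subseteq> Pi\<^sub>E UNIV (\<lambda>a. {..c a})"
    by (auto simp: PiE_UNIV_domain le_fun_def)
  show "finite (Pi\<^sub>E (UNIV::'d set) (\<lambda>a. {..c a}))" by (rule finite_PiE) auto
qed

lemma cupper_colfin:
  assumes "cupper (A :: ('d::finite) smat)"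
  shows "colfin A"
  unfolding colfin_def rowfin_def mtrans_def
proof
  fix c
  show "finite {x. A x c \<noteq> 0}"
    by (rule finite_subset[OF _ fin_below[of c]]) (use assms in \<open>auto simp: cupper_def\<close>)
qed

lemma cupper_mmult:
  assumes "cupper A" "cupper B"
  shows "cupper (mmult A B)"
  unfolding cupper_def
proof (intro allI impI)
  fix b c assume "mmult A B b c \<noteq> 0"
  then obtain x where "A b x \<noteq> 0" "B x c \<noteq> 0" using mmult_nonzero by blast
  then have "b \<le> x" "x \<le> c" using assms by (auto simp: cupper_def)
  then show "b \<le> c" by (rule order_trans)
qed

lemma cupper_mone: "cupper mone"
  unfolding cupper_def mone_def by auto

lemma cupper_mpow: "cupper M \<Longrightarrow> cupper (mpow M k)"
  by (induction k) (simp_all add: mpow_0 mpow_Suc cupper_mone cupper_mmult)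

lemma cupper_neg: "cupper M \<Longrightarrow> cupper (\<lambda>b c. - M b c)"
  unfolding cupper_def by auto

lemma cupper_mmult_fin:
  assumes "cupper (B::('d::finite) smat)"
  shows "mmult A B b c = (\<Sum>x\<in>{x. x \<le> c}. A b x * B x c)"
  by (rule mmult_fin[OF fin_below]) (use assms in \<open>auto simp: cupper_def\<close>)

lemma mpow_add:
  assumes "cupper (M::('d::finite) smat)"
  shows "mpow M (m + n) = mmult (mpow M m) (mpow M n)"
proof (induction m)
  case 0 then show ?case by (simp add: mpow_0)
next
  case (Suc m)
  have "mpow M (Suc m + n) = mmult M (mmult (mpow M m) (mpow M n))"
    using Suc by (simp add: mpow_Suc)
  also have "\<dots> = mmult (mmult M (mpow M m)) (mpow M n)"
    by (rule assoc_colfin[symmetric]) (simp_all add: cupper_colfin cupper_mpow assms)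
  finally show ?case by (simp add: mpow_Suc)
qed

lemma mpow_neg: "mpow (\<lambda>b c. - M b c) k = (\<lambda>b c. (-1)^k * mpow M k b c)"
proof (induction k)
  case 0 then show ?case by (simp add: mpow_0)
next
  case (Suc k)
  show ?case
  proof (intro ext)
    fix b c
    have "mpow (\<lambda>b c. - M b c) (Suc k) b c = (\<Sum>\<^sub>\<infinity>x. (-1)^(Suc k) * (M b x * mpow M k x c))"
      unfolding mpow_Suc Suc mmult_def by (intro infsum_cong) simp
    also have "\<dots> = (-1)^(Suc k) * mpow M (Suc k) b c"
      unfolding mpow_Suc mmult_def by (rule infsum_cmult_right')
    finally show "mpow (\<lambda>b c. - M b c) (Suc k) b c = (-1)^(Suc k) * mpow M (Suc k) b c" .
  qed
qed

lemma mpow_bound: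
  assumes M: "cupper (M::('d::finite) smat)"
  shows "\<exists>C\<ge>0. \<forall>n b. norm (mpow M n b y) \<le> C^n"
proof -
  define K where "K = {x::'d midx. x \<le> y}"
  have fK: "finite K" unfolding K_def by (rule fin_below)
  define C where "C = (\<Sum>x\<in>K. \<Sum>z\<in>K. norm (M x z))"
  have C0: "C \<ge> 0" unfolding C_def by (intro sum_nonneg) auto
  have rowC: "(\<Sum>z\<in>K. norm (M x z)) \<le> C" if "x \<in> K" for x
    unfolding C_def by (rule member_le_sum[OF that _ fK]) (auto intro: sum_nonneg)
  have main: "\<forall>b. norm (mpow M n b y) \<le> C^n" for n
  proof (induction n)
    case 0 then show ?case by (simp add: mpow_0 mone_def)
  next
    case (Suc n)
    show ?case
    proof
      fix b
      show "norm (mpow M (Suc n) b y) \<le> C ^ Suc n"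
      proof (cases "b \<in> K")
        case False
        then have "mpow M (Suc n) b y = 0"
          using cupper_mpow[OF M, of "Suc n"] by (auto simp: cupper_def K_def)
        then show ?thesis using C0 by simp
      next
        case True
        have "mpow M (Suc n) b y = (\<Sum>z\<in>K. M b z * mpow M n z y)"
          unfolding mpow_Suc K_def by (rule cupper_mmult_fin[OF cupper_mpow[OF M]])
        then have "norm (mpow M (Suc n) b y) \<le> (\<Sum>z\<in>K. norm (M b z) * norm (mpow M n z y))"
          by (simp add: sum_norm_le norm_mult)
        also have "\<dots> \<le> (\<Sum>z\<in>K. norm (M b z) * C^n)"
          using Suc by (intro sum_mono mult_left_mono) auto
        also have "\<dots> = (\<Sum>z\<in>K. norm (M b z)) * C^n" by (simp add: sum_distrib_right)
        also have "\<dots> \<le> C * C^n" using rowC[OF True] C0 by (intro mult_right_mono) auto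
        finally show ?thesis by simp
      qed
    qed
  qed
  show ?thesis using C0 main by blast
qed

lemma mexp_term_summable:
  assumes M: "cupper (M::('d::finite) smat)"
  shows "summable (\<lambda>n. norm (mpow M n b y / of_nat (fact n)))"
proof -
  obtain C where C: "C \<ge> 0" "\<And>n b. norm (mpow M n b y) \<le> C^n" using mpow_bound[OF M] by blast
  show ?thesis
  proof (rule summable_comparison_test'[OF summable_exp[of C]])
    fix n :: nat
    have "norm (norm (mpow M n b y / of_nat (fact n))) = norm (mpow M n b y) / fact n"
      by (simp add: norm_divide)
    also have "\<dots> \<le> C^n / fact n" by (intro divide_right_mono C(2)) auto
    also have "\<dots> = inverse (fact n) * C^n" by (simp add: field_simps)
    finally show "norm (norm (mpow M n b y / of_nat (fact n))) \<le> inverse (fact n) * C ^ n" .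
  qed
qed

lemma cupper_mexp: "cupper M \<Longrightarrow> cupper (mexp M)"
  unfolding cupper_def mexp_def
proof (intro allI impI)
  fix b c
  assume M: "\<forall>b c. M b c \<noteq> 0 \<longrightarrow> b \<le> c" and ne: "(\<Sum>n. mpow M n b c / of_nat (fact n)) \<noteq> 0"
  show "b \<le> c"
  proof (rule ccontr)
    assume "\<not> b \<le> c"
    then have "mpow M n b c = 0" for n using cupper_mpow[of M n] M by (auto simp: cupper_def)
    then show False using ne by simp
  qed
qed

lemma mexp_inverse:
  assumes M: "cupper (M::('d::finite) smat)"
  shows "mmult (mexp (\<lambda>b c. - M b c)) (mexp M) = mone"
proof (intro ext)
  fix b c :: "'d midx"
  define K where "K = {x::'d midx. x \<le> c}"
  have fK: "finite K" unfolding K_def by (rule fin_below)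
  define a where "a x i = mpow (\<lambda>b c. - M b c) i b x / of_nat (fact i)" for x i
  define e where "e x j = mpow M j x c / of_nat (fact j)" for x j
  have "mmult (mexp (\<lambda>b c. - M b c)) (mexp M) b c = (\<Sum>x\<in>K. mexp (\<lambda>b c. - M b c) b x * mexp M x c)"
    unfolding K_def by (rule cupper_mmult_fin[OF cupper_mexp[OF M]])
  also have "\<dots> = (\<Sum>x\<in>K. (\<Sum>i. a x i) * (\<Sum>j. e x j))"
    by (simp add: mexp_def a_def e_def)
  finally have eq: "mmult (mexp (\<lambda>b c. - M b c)) (mexp M) b c = (\<Sum>x\<in>K. (\<Sum>i. a x i) * (\<Sum>j. e x j))" .
  have cs: "(\<lambda>k. \<Sum>i\<le>k. a x i * e x (k - i)) sums ((\<Sum>i. a x i) * (\<Sum>j. e x j))" for x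
    unfolding a_def e_def
    by (rule Cauchy_product_sums[OF mexp_term_summable[OF cupper_neg[OF M]] mexp_term_summable[OF M]])
  have s1: "(\<lambda>k. \<Sum>x\<in>K. \<Sum>i\<le>k. a x i * e x (k - i)) sums (\<Sum>x\<in>K. (\<Sum>i. a x i) * (\<Sum>j. e x j))"
    by (rule sums_sum) (rule cs)
  have hterm: "(\<Sum>x\<in>K. \<Sum>i\<le>k. a x i * e x (k - i)) = (if k = 0 then mone b c else 0)" for k
  proof -
    have "(\<Sum>x\<in>K. \<Sum>i\<le>k. a x i * e x (k - i))
        = (\<Sum>i\<le>k. ((-1)^i / (of_nat (fact i) * of_nat (fact (k - i)))) * (\<Sum>x\<in>K. mpow M i b x * mpow M (k - i) x c))"
      unfolding a_def e_def mpow_neg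
      by (subst sum.swap) (simp add: sum_distrib_left mult_ac)
    also have "\<dots> = (\<Sum>i\<le>k. ((-1)^i / (of_nat (fact i) * of_nat (fact (k - i)))) * mpow M k b c)"
    proof (rule sum.cong[OF refl])
      fix i assume "i \<in> {..k}"
      then have "mpow M k b c = mmult (mpow M i) (mpow M (k - i)) b c"
        using mpow_add[OF M, of i "k - i"] by simp
      also have "\<dots> = (\<Sum>x\<in>K. mpow M i b x * mpow M (k - i) x c)"
        unfolding K_def by (rule cupper_mmult_fin[OF cupper_mpow[OF M]])
      finally show "((-1)^i / (of_nat (fact i) * of_nat (fact (k - i)))) * (\<Sum>x\<in>K. mpow M i b x * mpow M (k - i) x c)
          = ((-1)^i / (of_nat (fact i) * of_nat (fact (k - i)))) * mpow M k b c" by simp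
    qed
    also have "\<dots> = (\<Sum>i\<le>k. (-1)^i * of_nat (k choose i)) / of_nat (fact k) * mpow M k b c"
    proof -
      have "(-1)^i / (of_nat (fact i) * of_nat (fact (k - i))) = (-1)^i * of_nat (k choose i) / (of_nat (fact k) :: complex)"
        if "i \<le> k" for i
        using binomial_fact[OF that, where 'a=complex] by (simp add: field_simps)
      then show ?thesis by (simp add: sum_distrib_right sum_divide_distrib)
    qed
    also have "\<dots> = (if k = 0 then mone b c else 0)"
      by (cases "k = 0") (simp_all add: choose_alternating_sum mpow_0)
    finally show ?thesis .
  qed
  have s2: "(\<lambda>k. if k = 0 then mone b c else 0) sums mone b c"
    using sums_single[of 0 "\<lambda>_. mone b c"] by simp
  have "(\<Sum>x\<in>K. (\<Sum>i. a x i) * (\<Sum>j. e x j)) = mone b c"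
    using s1 s2 unfolding hterm by (rule sums_unique2)
  then show "mmult (mexp (\<lambda>b c. - M b c)) (mexp M) b c = mone b c" using eq by simp
qed



lemma infsum_sum_fin:
  fixes f :: "'i \<Rightarrow> 'a \<Rightarrow> 'b::{topological_comm_monoid_add, t2_space}"
  assumes "finite F" "\<And>i. i \<in> F \<Longrightarrow> f i summable_on A"
  shows "infsum (\<lambda>x. \<Sum>i\<in>F. f i x) A = (\<Sum>i\<in>F. infsum (f i) A) \<and> (\<lambda>x. \<Sum>i\<in>F. f i x) summable_on A"
  using assms
proof (induction F rule: finite_induct)
  case empty then show ?case by simp
next
  case (insert j F)
  then have IH: "infsum (\<lambda>x. \<Sum>i\<in>F. f i x) A = (\<Sum>i\<in>F. infsum (f i) A)"
    "(\<lambda>x. \<Sum>i\<in>F. f i x) summable_on A" and fj: "f j summable_on A" by auto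
  show ?case using insert(1,2) IH fj
    by (simp add: infsum_add summable_on_add)
qed

lemma fubini_part:
  fixes L V G W :: "('d::finite) smat"
  assumes def: "mmult3_defined V G W" and Lrd: "rowdeg L"
  shows "mmult (mmult (mmult L V) G) W = mmult L (mmult3 V G W)"
proof (intro ext)
  fix a c :: "'d midx"
  define F where "F = {x::'d midx. deg x \<le> deg a}"
  have fF: "finite F" unfolding F_def by (rule fin_deg)
  define T where "T \<beta> x \<delta> = V \<beta> x * G x \<delta> * W \<delta> c" for \<beta> x \<delta>
  have sumT: "(\<lambda>(x,\<delta>). T \<beta> x \<delta>) summable_on UNIV" for \<beta>
  proof (rule abs_summable_summable)
    show "(\<lambda>p. norm ((\<lambda>(x,\<delta>). T \<beta> x \<delta>) p)) summable_on UNIV"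
      using def unfolding mmult3_defined_def T_def by (simp add: case_prod_unfold)
  qed
  have sumT2: "(\<lambda>(x,\<delta>). T \<beta> x \<delta>) summable_on (UNIV \<times> UNIV)" for \<beta>
    using sumT by simp
  have sumT': "(\<lambda>(\<delta>,x). T \<beta> x \<delta>) summable_on (UNIV \<times> UNIV)" for \<beta>
    using summable_on_swap[of "\<lambda>(x,\<delta>). T \<beta> x \<delta>" UNIV UNIV] sumT2 by simp
  have slice: "(\<lambda>x. T \<beta> x \<delta>) summable_on UNIV" for \<beta> \<delta>
    using summable_on_SigmaD1[of "\<lambda>\<delta> x. T \<beta> x \<delta>" UNIV "\<lambda>_. UNIV" \<delta>] sumT' by simp
  have outer: "(\<lambda>\<delta>. \<Sum>\<^sub>\<infinity>x. T \<beta> x \<delta>) summable_on UNIV" for \<beta>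
    using summable_on_Sigma_banach[of "\<lambda>\<delta> x. T \<beta> x \<delta>" UNIV "\<lambda>_. UNIV"] sumT' by simp
  have GtT: "mmult3 V G W \<beta> c = (\<Sum>\<^sub>\<infinity>\<delta>. \<Sum>\<^sub>\<infinity>x. T \<beta> x \<delta>)" for \<beta>
  proof -
    have "mmult3 V G W \<beta> c = infsum (\<lambda>(x,\<delta>). T \<beta> x \<delta>) (UNIV \<times> UNIV)"
      unfolding mmult3_def T_def by simp
    also have "\<dots> = (\<Sum>\<^sub>\<infinity>x. \<Sum>\<^sub>\<infinity>\<delta>. T \<beta> x \<delta>)"
      using infsum_Sigma'_banach[of "\<lambda>x \<delta>. T \<beta> x \<delta>" UNIV "\<lambda>_. UNIV"] sumT2 by simp
    also have "\<dots> = (\<Sum>\<^sub>\<infinity>\<delta>. \<Sum>\<^sub>\<infinity>x. T \<beta> x \<delta>)"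
      by (rule infsum_swap_banach) (use sumT2 in simp)
    finally show ?thesis .
  qed
  have LV: "mmult L V a x = (\<Sum>\<beta>\<in>F. L a \<beta> * V \<beta> x)" for x
    unfolding F_def by (rule rowdeg_mmult_fin[OF Lrd])
  have "mmult (mmult (mmult L V) G) W a c = (\<Sum>\<^sub>\<infinity>\<delta>. (\<Sum>\<^sub>\<infinity>x. mmult L V a x * G x \<delta>) * W \<delta> c)"
    by (simp add: mmult_def)
  also have "\<dots> = (\<Sum>\<^sub>\<infinity>\<delta>. \<Sum>\<^sub>\<infinity>x. \<Sum>\<beta>\<in>F. L a \<beta> * T \<beta> x \<delta>)"
  proof (rule infsum_cong)
    fix \<delta>
    have "(\<Sum>\<^sub>\<infinity>x. mmult L V a x * G x \<delta>) * W \<delta> c = (\<Sum>\<^sub>\<infinity>x. mmult L V a x * G x \<delta> * W \<delta> c)"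
      by (rule infsum_cmult_left'[symmetric])
    also have "\<dots> = (\<Sum>\<^sub>\<infinity>x. \<Sum>\<beta>\<in>F. L a \<beta> * T \<beta> x \<delta>)"
      by (rule infsum_cong) (simp add: LV T_def sum_distrib_right mult.assoc)
    finally show "(\<Sum>\<^sub>\<infinity>x. mmult L V a x * G x \<delta>) * W \<delta> c = (\<Sum>\<^sub>\<infinity>x. \<Sum>\<beta>\<in>F. L a \<beta> * T \<beta> x \<delta>)" .
  qed
  also have "\<dots> = (\<Sum>\<^sub>\<infinity>\<delta>. \<Sum>\<beta>\<in>F. L a \<beta> * (\<Sum>\<^sub>\<infinity>x. T \<beta> x \<delta>))"
  proof (rule infsum_cong)
    fix \<delta>
    have "(\<Sum>\<^sub>\<infinity>x. \<Sum>\<beta>\<in>F. L a \<beta> * T \<beta> x \<delta>) = (\<Sum>\<beta>\<in>F. \<Sum>\<^sub>\<infinity>x. L a \<beta> * T \<beta> x \<delta>)"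
      using infsum_sum_fin[OF fF, of "\<lambda>\<beta> x. L a \<beta> * T \<beta> x \<delta>" UNIV]
      by (simp add: summable_on_cmult_right slice)
    then show "(\<Sum>\<^sub>\<infinity>x. \<Sum>\<beta>\<in>F. L a \<beta> * T \<beta> x \<delta>) = (\<Sum>\<beta>\<in>F. L a \<beta> * (\<Sum>\<^sub>\<infinity>x. T \<beta> x \<delta>))"
      by (simp add: infsum_cmult_right')
  qed
  also have "\<dots> = (\<Sum>\<beta>\<in>F. L a \<beta> * (\<Sum>\<^sub>\<infinity>\<delta>. \<Sum>\<^sub>\<infinity>x. T \<beta> x \<delta>))"
  proof -
    have "(\<Sum>\<^sub>\<infinity>\<delta>. \<Sum>\<beta>\<in>F. L a \<beta> * (\<Sum>\<^sub>\<infinity>x. T \<beta> x \<delta>)) = (\<Sum>\<beta>\<in>F. \<Sum>\<^sub>\<infinity>\<delta>. L a \<beta> * (\<Sum>\<^sub>\<infinity>x. T \<beta> x \<delta>))"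
      using infsum_sum_fin[OF fF, of "\<lambda>\<beta> \<delta>. L a \<beta> * (\<Sum>\<^sub>\<infinity>x. T \<beta> x \<delta>)" UNIV]
      by (simp add: summable_on_cmult_right outer)
    then show ?thesis by (simp add: infsum_cmult_right')
  qed
  also have "\<dots> = (\<Sum>\<beta>\<in>F. L a \<beta> * mmult3 V G W \<beta> c)"
    by (simp add: GtT)
  also have "\<dots> = mmult L (mmult3 V G W) a c"
    unfolding F_def by (rule rowdeg_mmult_fin[OF Lrd, symmetric])
  finally show "mmult (mmult (mmult L V) G) W a c = mmult L (mmult3 V G W) a c" .
qed

lemma cupper_Lam: "cupper (Lam a)"
  unfolding cupper_def Lam_def by (auto simp: le_fun_def split: if_splits)

lemma cupper_Lam_pow: "cupper (Lam_pow \<alpha>)"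
proof -
  have "cupper (foldr (\<lambda>a M. mmult (mpow (Lam a) (\<alpha> a)) M) xs mone)" for xs
    by (induction xs) (simp_all add: cupper_mone cupper_mmult cupper_mpow cupper_Lam)
  then show ?thesis unfolding Lam_pow_def by blast
qed

lemma cupper_tLam: "cupper (tLam t)"
  unfolding cupper_def tLam_def
proof (intro allI impI)
  fix b c :: "'a midx"
  assume ne: "(\<Sum>\<^sub>\<infinity>\<alpha>. t \<alpha> * Lam_pow \<alpha> b c) \<noteq> 0"
  show "b \<le> c"
  proof (rule ccontr)
    assume "\<not> b \<le> c"
    then have "Lam_pow \<alpha> b c = 0" for \<alpha> using cupper_Lam_pow[of \<alpha>] by (auto simp: cupper_def)
    then show False using ne by simp
  qed
qed

lemma W0_cupper: "cupper (W0 t)"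
  unfolding W0_def by (rule cupper_mexp[OF cupper_tLam])

lemma W0inv_cupper: "cupper (W0inv t)"
  unfolding W0inv_def by (rule cupper_mexp[OF cupper_neg[OF cupper_tLam]])

lemma W0inv_W0: "mmult (W0inv t) (W0 t) = mone"
  unfolding W0inv_def W0_def by (rule mexp_inverse[OF cupper_tLam])



lemma rowdeg_mmult:
  assumes "rowdeg A" "rowdeg B"
  shows "rowdeg (mmult A B)"
  unfolding rowdeg_def
proof (intro allI impI)
  fix a c assume "mmult A B a c \<noteq> 0"
  then obtain x where "A a x \<noteq> 0" "B x c \<noteq> 0" using mmult_nonzero by blast
  then have "deg x \<le> deg a" "deg c \<le> deg x" using assms by (auto simp: rowdeg_def)
  then show "deg c \<le> deg a" by simp
qed

lemma colfin_mtrans: "rowfin A \<Longrightarrow> colfin (mtrans A)"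
  unfolding colfin_def by simp

theorem mainTheorem9:
  fixes G Z1 Z2 S1 S2 H :: "('d::{finite,linorder}) smat"
    and t1 t2 :: "'d midx \<Rightarrow> complex"
  assumes Gt_defined: "mmult3_defined (W0 t1) G (mtrans (W0inv t2))"
    and S1: "block_lower_unitriangular S1"
    and S2: "block_lower_unitriangular S2"
    and H: "block_diagonal_nonsingular H"
    and GB: "mmult3 (W0 t1) G (mtrans (W0inv t2))
               = mmult (mmult (lu_inv S1) H) (mtrans (lu_inv S2))"
    and Z1: "block_strictly_lower (mmult Z1 (W0inv t1))"
    and Z2: "block_upper (mmult Z2 (mtrans (W0inv t2)))"
    and ZG: "mmult Z1 G = Z2"
  shows "Z1 = (\<lambda>_ _. 0) \<and> Z2 = (\<lambda>_ _. 0)"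
proof -
  define V where "V = W0 t1"
  define Vi where "Vi = W0inv t1"
  define W where "W = mtrans (W0inv t2)"
  define L where "L = mmult Z1 Vi"
  define U where "U = mmult Z2 W"
  define S1i where "S1i = lu_inv S1"
  define S2i where "S2i = lu_inv S2"
  define P where "P = mmult S1i H"
  define Q where "Q = mmult L P"
  obtain K where K: "block_diagonal K" "mmult H K = mone"
    using H unfolding block_diagonal_nonsingular_def by blast
  have Hrd: "rowdeg H" using H by (simp add: block_diagonal_nonsingular_def bd_rowdeg)
  have S1i: "block_lower_unitriangular S1i" "mmult S1i S1 = mone" "mmult S1 S1i = mone"
    using lu_inv_props[OF S1] unfolding S1i_def by auto
  have S2i: "block_lower_unitriangular S2i" "mmult S2i S2 = mone" "mmult S2 S2i = mone"
    using lu_inv_props[OF S2] unfolding S2i_def by auto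
  have Lrd: "rowdeg L" using Z1 by (simp add: L_def Vi_def bsl_rowdeg)
  have S1ird: "rowdeg S1i" by (rule blut_rowdeg[OF S1i(1)])
  have S2ird: "rowdeg S2i" by (rule blut_rowdeg[OF S2i(1)])
  have Prd: "rowdeg P" unfolding P_def by (rule rowdeg_mmult[OF S1ird Hrd])
  have Z1eq: "Z1 = mmult L V"
  proof -
    have "mmult L V = mmult Z1 (mmult Vi V)"
      unfolding L_def by (rule assoc_colfin) (simp_all add: Vi_def V_def cupper_colfin W0_cupper W0inv_cupper)
    then show ?thesis by (simp add: Vi_def V_def W0inv_W0)
  qed
  have UL: "U = mmult L (mmult3 V G W)"
  proof -
    have "U = mmult (mmult (mmult L V) G) W" unfolding U_def using ZG Z1eq by simp
    also have "\<dots> = mmult L (mmult3 V G W)"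
      by (rule fubini_part) (use Gt_defined Lrd in \<open>simp_all add: V_def W_def\<close>)
    finally show ?thesis .
  qed
  have UQ: "U = mmult Q (mtrans S2i)"
  proof -
    have "U = mmult L (mmult P (mtrans S2i))"
      using UL GB by (simp add: V_def W_def P_def S1i_def S2i_def)
    also have "\<dots> = mmult Q (mtrans S2i)"
      unfolding Q_def by (rule assoc_rowfin[symmetric]) (simp_all add: rowdeg_rowfin Lrd Prd)
    finally show ?thesis .
  qed
  have QU: "Q = mmult U (mtrans S2)"
  proof -
    have "mmult U (mtrans S2) = mmult Q (mmult (mtrans S2i) (mtrans S2))"
      unfolding UQ by (rule assoc_colfin) (simp_all add: colfin_mtrans rowdeg_rowfin S2ird blut_rowdeg[OF S2])
    also have "mmult (mtrans S2i) (mtrans S2) = mone"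
      using S2i(3) by (metis mtrans_mmult mtrans_mone)
    finally show ?thesis by simp
  qed
  have Q0: "Q = (\<lambda>_ _. 0)"
  proof (intro ext)
    fix a c
    show "Q a c = 0"
    proof (rule ccontr)
      assume ne: "Q a c \<noteq> 0"
      then obtain x where x: "L a x \<noteq> 0" "P x c \<noteq> 0" unfolding Q_def using mmult_nonzero by blast
      have "deg x < deg a" using x(1) Z1 unfolding L_def Vi_def block_strictly_lower_def using not_le by blast
      moreover have "deg c \<le> deg x" using x(2) Prd unfolding rowdeg_def by blast
      moreover obtain y where y: "U a y \<noteq> 0" "mtrans S2 y c \<noteq> 0"
        using ne unfolding QU using mmult_nonzero by blast
      have "deg a \<le> deg y" using y(1) Z2 unfolding U_def W_def block_upper_def using not_le by blast
      moreover have "deg y \<le> deg c" using y(2) blut_rowdeg[OF S2] unfolding rowdeg_def mtrans_def by blast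
      ultimately show False by simp
    qed
  qed
  have LS1i: "mmult L S1i = (\<lambda>_ _. 0)"
  proof -
    have rf: "rowfin (mmult L S1i)" by (simp add: rowfin_mmult rowdeg_rowfin Lrd S1ird)
    have "mmult L S1i = mmult (mmult L S1i) (mmult H K)" using K by simp
    also have "\<dots> = mmult (mmult (mmult L S1i) H) K"
      by (rule assoc_rowfin[symmetric]) (simp_all add: rf rowdeg_rowfin Hrd)
    also have "mmult (mmult L S1i) H = Q"
      unfolding Q_def P_def by (rule assoc_rowfin) (simp_all add: rowdeg_rowfin Lrd S1ird)
    finally show ?thesis using Q0 by simp
  qed
  have L0: "L = (\<lambda>_ _. 0)"
  proof -
    have "L = mmult L (mmult S1i S1)" using S1i by simp
    also have "\<dots> = mmult (mmult L S1i) S1"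
      by (rule assoc_rowfin[symmetric]) (simp_all add: rowdeg_rowfin Lrd S1ird)
    finally show ?thesis using LS1i by simp
  qed
  have "Z1 = (\<lambda>_ _. 0)" using Z1eq L0 by simp
  moreover have "Z2 = (\<lambda>_ _. 0)" using ZG calculation by simp
  ultimately show ?thesis by simp
qed

end
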